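(* Let $\Omega\subset\mathbb R^d$ be a bounded Borel set, $f:\Omega\to[0,\infty)$ with $\int_\Omega f=1$, $p\ge1$, $x_1,\dots,x_k\in\Omega$, and $h_1,\dots,h_k:[0,1]\to[0,\infty)$ strictly increasing. Then every equilibrium is a Pareto optimum.
   Context: A partition of $\Omega$ is a family of Borel sets pairwise disjoint up to $f$-negligible sets whose union has full $f\,dx$-measure. For a partition $(B_i)_{i=1}^k$, $C(x,(B_i)_i)=\sum_{i=1}^k[|x-x_i|^p+h_i(\int_{B_i}f\,dx)]\mathbf 1_{B_i}(x)$. A partition $(A_i)$ is an equilibrium if, with $c_j=\int_{A_j}f$, for every $i$: $A_i=\{x:|x-x_i|^p+h_i(c_i)<|x-x_j|^p+h_j(c_j)\ \forall j\ne i\}$ up to $f$-negligible sets. A partition $(A_i)$ is a Pareto optimum if there is no partition $(B_i)_{i=1}^k$ with $C(x,(B_i)_i)\le C(x,(A_i)_i)$ for $f$-a.e. $x$ and strict inequality on a set of positive $f\,dx$-measure. *)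

theory Defs
  imports "HOL-Analysis.Analysis"
begin

text \<open>The measure f dx on the ambient space (f extended by zero outside Omega).
  A set N is f-negligible iff it has measure zero for this measure.\<close>
definition fmeas :: "'a::euclidean_space set \<Rightarrow> ('a \<Rightarrow> real) \<Rightarrow> 'a measure" where
  "fmeas \<Omega> f = density lebesgue (\<lambda>x. ennreal (f x * indicator \<Omega> x))"

definition fmass :: "'a::euclidean_space set \<Rightarrow> ('a \<Rightarrow> real) \<Rightarrow> 'a set \<Rightarrow> real" where
  "fmass \<Omega> f B = (\<integral>x\<in>(B \<inter> \<Omega>). f x \<partial>lebesgue)"

definition is_partition ::
  "'a::euclidean_space set \<Rightarrow> ('a \<Rightarrow> real) \<Rightarrow> nat \<Rightarrow> (nat \<Rightarrow> 'a set) \<Rightarrow> bool" where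
  "is_partition \<Omega> f k B \<longleftrightarrow>
     (\<forall>i\<in>{1..k}. B i \<in> sets borel) \<and>
     (\<forall>i\<in>{1..k}. \<forall>j\<in>{1..k}. i \<noteq> j \<longrightarrow> emeasure (fmeas \<Omega> f) (B i \<inter> B j) = 0) \<and>
     emeasure (fmeas \<Omega> f) (UNIV - (\<Union>i\<in>{1..k}. B i)) = 0"

definition cost ::
  "'a::euclidean_space set \<Rightarrow> ('a \<Rightarrow> real) \<Rightarrow> nat \<Rightarrow> (nat \<Rightarrow> 'a) \<Rightarrow> real \<Rightarrow>
   (nat \<Rightarrow> real \<Rightarrow> real) \<Rightarrow> (nat \<Rightarrow> 'a set) \<Rightarrow> 'a \<Rightarrow> real" where
  "cost \<Omega> f k xs p h B x =
     (\<Sum>i\<in>{1..k}. (norm (x - xs i) powr p + h i (fmass \<Omega> f (B i))) * indicator (B i) x)"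

definition is_equilibrium ::
  "'a::euclidean_space set \<Rightarrow> ('a \<Rightarrow> real) \<Rightarrow> nat \<Rightarrow> (nat \<Rightarrow> 'a) \<Rightarrow> real \<Rightarrow>
   (nat \<Rightarrow> real \<Rightarrow> real) \<Rightarrow> (nat \<Rightarrow> 'a set) \<Rightarrow> bool" where
  "is_equilibrium \<Omega> f k xs p h A \<longleftrightarrow>
     is_partition \<Omega> f k A \<and>
     (\<forall>i\<in>{1..k}.
        (let E = {x. \<forall>j\<in>{1..k}. j \<noteq> i \<longrightarrow>
                     norm (x - xs i) powr p + h i (fmass \<Omega> f (A i))
                       < norm (x - xs j) powr p + h j (fmass \<Omega> f (A j))}
         in emeasure (fmeas \<Omega> f) ((A i - E) \<union> (E - A i)) = 0))"

definition is_pareto ::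
  "'a::euclidean_space set \<Rightarrow> ('a \<Rightarrow> real) \<Rightarrow> nat \<Rightarrow> (nat \<Rightarrow> 'a) \<Rightarrow> real \<Rightarrow>
   (nat \<Rightarrow> real \<Rightarrow> real) \<Rightarrow> (nat \<Rightarrow> 'a set) \<Rightarrow> bool" where
  "is_pareto \<Omega> f k xs p h A \<longleftrightarrow>
     is_partition \<Omega> f k A \<and>
     \<not> (\<exists>B. is_partition \<Omega> f k B \<and>
            (AE x in fmeas \<Omega> f. cost \<Omega> f k xs p h B x \<le> cost \<Omega> f k xs p h A x) \<and>
            emeasure (fmeas \<Omega> f) {x. cost \<Omega> f k xs p h B x < cost \<Omega> f k xs p h A x} > 0)"

end

theory Submission
  imports Defs
begin

lemma borel_leb: "B \<in> sets borel \<Longrightarrow> B \<in> sets lebesgue"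
  by (metis sets_completionI_sets sets_lborel)

lemma E_borel:
  fixes xs :: "nat \<Rightarrow> 'a::euclidean_space"
  shows "{x. \<forall>j\<in>{1..k}. j \<noteq> i \<longrightarrow> norm (x - xs i) powr p + a < norm (x - xs j) powr p + b j} \<in> sets borel"
proof -
  have "Measurable.pred borel (\<lambda>x. \<forall>j\<in>{1..k}. j \<noteq> i \<longrightarrow> norm (x - xs i) powr p + a < norm (x - xs j) powr p + b j)"
    by measurable
  then show ?thesis by (simp add: pred_def)
qed

lemma part_AE:
  assumes "is_partition \<Omega> f k B"
  shows "AE x in fmeas \<Omega> f. \<exists>j\<in>{1..k}. x \<in> B j \<and> (\<forall>i\<in>{1..k}. i \<noteq> j \<longrightarrow> x \<notin> B i)"
proof -
  have sp: "space (fmeas \<Omega> f) = UNIV" by (simp add: fmeas_def)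
  have st: "sets (fmeas \<Omega> f) = sets lebesgue" by (simp add: fmeas_def)
  have Bb: "\<And>i. i \<in> {1..k} \<Longrightarrow> B i \<in> sets lebesgue"
    using assms borel_leb unfolding is_partition_def by blast
  have 1: "AE x in fmeas \<Omega> f. \<forall>i\<in>{1..k}. \<forall>j\<in>{1..k}. i \<noteq> j \<longrightarrow> x \<notin> B i \<inter> B j"
  proof (intro AE_finite_allI finite_atLeastAtMost)
    fix i j assume ij: "i \<in> {1..k}" "j \<in> {1..k}"
    show "AE x in fmeas \<Omega> f. i \<noteq> j \<longrightarrow> x \<notin> B i \<inter> B j"
    proof (cases "i = j")
      case False
      have "B i \<inter> B j \<in> null_sets (fmeas \<Omega> f)"
        using assms ij False Bb[OF ij(1)] Bb[OF ij(2)] unfolding is_partition_def null_sets_def st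
        by auto
      then show ?thesis by (rule AE_I') (auto simp: sp)
    qed simp
  qed
  have 2: "AE x in fmeas \<Omega> f. x \<in> (\<Union>i\<in>{1..k}. B i)"
  proof -
    have "UNIV - (\<Union>i\<in>{1..k}. B i) \<in> null_sets (fmeas \<Omega> f)"
      using assms Bb unfolding is_partition_def null_sets_def st by auto
    then show ?thesis by (rule AE_I') (auto simp: sp)
  qed
  from 1 2 show ?thesis by eventually_elim blast
qed

lemma cost_single:
  assumes "j \<in> {1..k}" "x \<in> B j" "\<forall>i\<in>{1..k}. i \<noteq> j \<longrightarrow> x \<notin> B i"
  shows "cost \<Omega> f k xs p h B x = norm (x - xs j) powr p + h j (fmass \<Omega> f (B j))"
proof -
  have "cost \<Omega> f k xs p h B x = (\<Sum>i\<in>{j}. (norm (x - xs i) powr p + h i (fmass \<Omega> f (B i))) * indicator (B i) x)"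
    unfolding cost_def using assms by (intro sum.mono_neutral_right) auto
  then show ?thesis using assms by simp
qed

lemma ind_single:
  fixes k :: nat
  assumes "j \<in> {1..k}" "x \<in> B j" "\<forall>i\<in>{1..k}. i \<noteq> j \<longrightarrow> x \<notin> B i"
  shows "(\<Sum>i\<in>{1..k}. indicator (B i) x) = (1::real)"
proof -
  have "(\<Sum>i\<in>{1..k}. indicator (B i) x) = (\<Sum>i\<in>{j}. indicator (B i) x :: real)"
    using assms by (intro sum.mono_neutral_right) (auto simp del: atLeastAtMost_iff)
  then show ?thesis using assms by simp
qed

lemma fmass_eq:
  "fmass \<Omega> f B = (\<integral>x. indicator B x * (indicator \<Omega> x * f x) \<partial>lebesgue)"
  unfolding fmass_def set_lebesgue_integral_def
  by (intro Bochner_Integration.integral_cong) (auto simp: indicator_def)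

lemma AE_to_leb:
  assumes "set_integrable lebesgue \<Omega> f"
    and "AE x in fmeas \<Omega> f. P x" and "\<forall>x\<in>\<Omega>. f x \<ge> 0"
  shows "AE x in lebesgue. f x * indicator \<Omega> x \<noteq> 0 \<longrightarrow> P x"
proof -
  have "integrable lebesgue (\<lambda>x. indicator \<Omega> x * f x)"
    using assms(1) by (simp add: set_integrable_def)
  then have m: "(\<lambda>x. f x * indicator \<Omega> x) \<in> borel_measurable lebesgue"
    by (simp add: mult.commute)
  have "AE x in lebesgue. 0 < ennreal (f x * indicator \<Omega> x) \<longrightarrow> P x"
    using assms(2) unfolding fmeas_def by (subst (asm) AE_density) (use m in auto)
  then show ?thesis
    proof (rule eventually_mono)
    fix x assume H: "0 < ennreal (f x * indicator \<Omega> x) \<longrightarrow> P x"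
    show "f x * indicator \<Omega> x \<noteq> 0 \<longrightarrow> P x"
    proof
      assume "f x * indicator \<Omega> x \<noteq> 0"
      then have "x \<in> \<Omega>" "f x \<noteq> 0" by (auto simp: indicator_def split: if_splits)
      then have "f x > 0" using assms(3) by force
      then show "P x" using H \<open>x \<in> \<Omega>\<close> by simp
    qed
  qed
qed

lemma mass_nonneg:
  fixes f :: "'a::euclidean_space \<Rightarrow> real"
  assumes "\<forall>x\<in>\<Omega>. f x \<ge> 0"
  shows "fmass \<Omega> f B \<ge> 0"
  unfolding fmass_eq using assms
  by (intro Bochner_Integration.integral_nonneg) (auto simp: indicator_def)

lemma intG:
  fixes f :: "'a::euclidean_space \<Rightarrow> real"
  assumes "set_integrable lebesgue \<Omega> f" "B \<in> sets borel"
  shows "integrable lebesgue (\<lambda>x. indicator B x * (indicator \<Omega> x * f x))"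
  using integrable_mult_indicator[where f="\<lambda>x. indicator \<Omega> x *\<^sub>R f x", OF borel_leb[OF assms(2)] assms(1)[unfolded set_integrable_def]]
  by simp

lemma mass_zero:
  assumes "set_integrable lebesgue \<Omega> f" "\<forall>x\<in>\<Omega>. f x \<ge> 0" "B \<in> sets borel"
    and "AE x in fmeas \<Omega> f. x \<notin> B"
  shows "fmass \<Omega> f B = 0"
proof -
  have "AE x in lebesgue. f x * indicator \<Omega> x \<noteq> 0 \<longrightarrow> x \<notin> B"
    using AE_to_leb[OF assms(1) assms(4) assms(2)] .
  then have ae: "AE x in lebesgue. indicator B x * (indicator \<Omega> x * f x) = (0::real)"
    by eventually_elim (auto simp: indicator_def)
  have "(\<integral>x. indicator B x * (indicator \<Omega> x * f x) \<partial>lebesgue) = 0"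
    by (rule integral_eq_zero_AE[OF ae])
  then show ?thesis unfolding fmass_eq by simp
qed

lemma mass_sum:
  fixes k :: nat
  assumes "set_integrable lebesgue \<Omega> f" "\<forall>x\<in>\<Omega>. f x \<ge> 0"
    and "(\<integral>x\<in>\<Omega>. f x \<partial>lebesgue) = 1"
    and P: "is_partition \<Omega> f k B"
  shows "(\<Sum>i\<in>{1..k}. fmass \<Omega> f (B i)) = 1"
proof -
  have Bb: "\<And>i. i \<in> {1..k} \<Longrightarrow> B i \<in> sets borel"
    using P unfolding is_partition_def by blast
  have iG: "integrable lebesgue (\<lambda>x. indicator \<Omega> x * f x)"
    using assms(1) by (simp add: set_integrable_def)
  have "(\<Sum>i\<in>{1..k}. fmass \<Omega> f (B i)) =
      (\<integral>x. (\<Sum>i\<in>{1..k}. indicator (B i) x * (indicator \<Omega> x * f x)) \<partial>lebesgue)"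
    unfolding fmass_eq using intG[OF assms(1) Bb]
    by (intro Bochner_Integration.integral_sum[symmetric]) auto
  also have "\<dots> = (\<integral>x. indicator \<Omega> x * f x \<partial>lebesgue)"
  proof (intro Bochner_Integration.integral_cong_AE)
    show "(\<lambda>x. \<Sum>i\<in>{1..k}. indicator (B i) x * (indicator \<Omega> x * f x)) \<in> borel_measurable lebesgue"
      using intG[OF assms(1) Bb] by (intro borel_measurable_sum) auto
    show "(\<lambda>x. indicator \<Omega> x * f x) \<in> borel_measurable lebesgue" using iG by auto
    have "AE x in lebesgue. f x * indicator \<Omega> x \<noteq> 0 \<longrightarrow>
        (\<exists>j\<in>{1..k}. x \<in> B j \<and> (\<forall>i\<in>{1..k}. i \<noteq> j \<longrightarrow> x \<notin> B i))"
      using AE_to_leb[OF assms(1) part_AE[OF P] assms(2)] .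
    then show "AE x in lebesgue. (\<Sum>i\<in>{1..k}. indicator (B i) x * (indicator \<Omega> x * f x)) = indicator \<Omega> x * f x"
    proof eventually_elim
      case (elim x)
      show ?case
      proof (cases "f x * indicator \<Omega> x = 0")
        case True then show ?thesis by (simp add: mult.commute)
      next
        case False
        then obtain j where "j \<in> {1..k}" "x \<in> B j" "\<forall>i\<in>{1..k}. i \<noteq> j \<longrightarrow> x \<notin> B i" using elim by blast
        from ind_single[OF this] show ?thesis by (simp add: sum_distrib_right[symmetric])
      qed
    qed
  qed
  also have "\<dots> = 1" using assms(3) by (simp add: set_lebesgue_integral_def)
  finally show ?thesis .
qed

lemma mass_le1:
  fixes k :: nat
  assumes "set_integrable lebesgue \<Omega> f" "\<forall>x\<in>\<Omega>. f x \<ge> 0"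
    and "(\<integral>x\<in>\<Omega>. f x \<partial>lebesgue) = 1"
    and P: "is_partition \<Omega> f k B" and i: "i \<in> {1..k}"
  shows "fmass \<Omega> f (B i) \<in> {0..1}"
proof -
  have "fmass \<Omega> f (B i) \<le> (\<Sum>i\<in>{1..k}. fmass \<Omega> f (B i))"
    using i mass_nonneg[OF assms(2)] by (intro member_le_sum) auto
  then show ?thesis using mass_sum[OF assms(1-3) P] mass_nonneg[OF assms(2)] by auto
qed

theorem corollary4p10:
  fixes \<Omega> :: "'a::euclidean_space set" and f :: "'a \<Rightarrow> real"
    and k :: nat and xs :: "nat \<Rightarrow> 'a" and p :: real
    and h :: "nat \<Rightarrow> real \<Rightarrow> real" and A :: "nat \<Rightarrow> 'a set"
  assumes "\<Omega> \<in> sets borel" and "bounded \<Omega>"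
    and "\<forall>x\<in>\<Omega>. f x \<ge> 0"
    and "set_integrable lebesgue \<Omega> f"
    and "(\<integral>x\<in>\<Omega>. f x \<partial>lebesgue) = 1"
    and "p \<ge> 1"
    and "\<forall>i\<in>{1..k}. xs i \<in> \<Omega>"
    and "\<forall>i\<in>{1..k}. strict_mono_on {0..1} (h i)"
    and "\<forall>i\<in>{1..k}. \<forall>t\<in>{0..1}. h i t \<ge> 0"
    and "is_equilibrium \<Omega> f k xs p h A"
  shows "is_pareto \<Omega> f k xs p h A"
proof -
  define M where "M = fmeas \<Omega> f"
  have sp: "space M = UNIV" by (simp add: M_def fmeas_def)
  have st: "sets M = sets lebesgue" by (simp add: M_def fmeas_def)
  define c where "c i = fmass \<Omega> f (A i)" for i
  define gA where "gA i x = norm (x - xs i) powr p + h i (c i)" for i x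
  have partA: "is_partition \<Omega> f k A" using assms(10) by (simp add: is_equilibrium_def)
  have Ab: "\<And>i. i \<in> {1..k} \<Longrightarrow> A i \<in> sets borel"
    using partA unfolding is_partition_def by blast
  have E: "AE x in M. \<forall>i\<in>{1..k}. x \<in> A i \<longrightarrow> (\<forall>j\<in>{1..k}. j \<noteq> i \<longrightarrow> gA i x < gA j x)"
  proof (intro AE_finite_allI finite_atLeastAtMost)
    fix i assume i: "i \<in> {1..k}"
    define Ei where "Ei = {x. \<forall>j\<in>{1..k}. j \<noteq> i \<longrightarrow>
                     norm (x - xs i) powr p + h i (fmass \<Omega> f (A i))
                       < norm (x - xs j) powr p + h j (fmass \<Omega> f (A j))}"
    have "emeasure M ((A i - Ei) \<union> (Ei - A i)) = 0"
      using assms(10) i unfolding is_equilibrium_def M_def Ei_def Let_def by blast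
    moreover have "Ei \<in> sets borel" unfolding Ei_def by (rule E_borel)
    then have "(A i - Ei) \<union> (Ei - A i) \<in> sets M"
      using Ab[OF i] st borel_leb by auto
    ultimately have "(A i - Ei) \<union> (Ei - A i) \<in> null_sets M" by auto
    then have "AE x in M. x \<notin> (A i - Ei) \<union> (Ei - A i)"
      by (rule AE_I') (auto simp: sp)
    then show "AE x in M. x \<in> A i \<longrightarrow> (\<forall>j\<in>{1..k}. j \<noteq> i \<longrightarrow> gA i x < gA j x)"
      by eventually_elim (auto simp: Ei_def gA_def c_def)
  qed
  have minA: "AE x in M. \<forall>i\<in>{1..k}. cost \<Omega> f k xs p h A x \<le> gA i x"
    using E part_AE[OF partA, folded M_def]
  proof eventually_elim
    case (elim x)
    then obtain j where j: "j \<in> {1..k}" "x \<in> A j" "\<forall>i\<in>{1..k}. i \<noteq> j \<longrightarrow> x \<notin> A i" by blast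
    have "cost \<Omega> f k xs p h A x = gA j x"
      using cost_single[OF j] by (simp add: gA_def c_def)
    then show ?case using elim j by (metis order.strict_implies_order order_refl)
  qed
  have "\<not> (\<exists>B. is_partition \<Omega> f k B \<and>
            (AE x in fmeas \<Omega> f. cost \<Omega> f k xs p h B x \<le> cost \<Omega> f k xs p h A x) \<and>
            emeasure (fmeas \<Omega> f) {x. cost \<Omega> f k xs p h B x < cost \<Omega> f k xs p h A x} > 0)"
  proof
    assume "\<exists>B. is_partition \<Omega> f k B \<and>
            (AE x in fmeas \<Omega> f. cost \<Omega> f k xs p h B x \<le> cost \<Omega> f k xs p h A x) \<and>
            emeasure (fmeas \<Omega> f) {x. cost \<Omega> f k xs p h B x < cost \<Omega> f k xs p h A x} > 0"
    then obtain B where partB: "is_partition \<Omega> f k B"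
      and le: "AE x in M. cost \<Omega> f k xs p h B x \<le> cost \<Omega> f k xs p h A x"
      and pos: "emeasure M {x. cost \<Omega> f k xs p h B x < cost \<Omega> f k xs p h A x} > 0"
      unfolding M_def by blast
    define b where "b i = fmass \<Omega> f (B i)" for i
    define gB where "gB i x = norm (x - xs i) powr p + h i (b i)" for i x
    have Bb: "\<And>i. i \<in> {1..k} \<Longrightarrow> B i \<in> sets borel"
      using partB unfolding is_partition_def by blast
    have AEB: "AE x in M. \<exists>j\<in>{1..k}. x \<in> B j \<and> (\<forall>i\<in>{1..k}. i \<noteq> j \<longrightarrow> x \<notin> B i)
        \<and> cost \<Omega> f k xs p h B x = gB j x"
      using part_AE[OF partB, folded M_def]
      by eventually_elim (metis cost_single gB_def b_def)
    have cI: "\<And>i. i \<in> {1..k} \<Longrightarrow> c i \<in> {0..1}"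
      unfolding c_def using mass_le1[OF assms(4,3,5) partA] by blast
    have bI: "\<And>i. i \<in> {1..k} \<Longrightarrow> b i \<in> {0..1}"
      unfolding b_def using mass_le1[OF assms(4,3,5) partB] by blast
    show False
    proof (cases "\<exists>i\<in>{1..k}. b i > c i")
      case True
      then obtain i where i: "i \<in> {1..k}" "b i > c i" by blast
      have hlt: "h i (c i) < h i (b i)"
        using assms(8) i cI[OF i(1)] bI[OF i(1)] by (meson strict_mono_onD)
      have "AE x in M. x \<notin> B i"
        using AEB minA le
      proof eventually_elim
        case (elim x)
        show ?case
        proof
          assume x: "x \<in> B i"
          from elim obtain j where j: "j \<in> {1..k}" "x \<in> B j"
            "\<forall>i\<in>{1..k}. i \<noteq> j \<longrightarrow> x \<notin> B i" "cost \<Omega> f k xs p h B x = gB j x" by blast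
          have "j = i" by (rule ccontr) (use j(3) x i(1) in auto)
          then have "cost \<Omega> f k xs p h B x = gB i x" using j by simp
          moreover have "gA i x < gB i x" using hlt by (simp add: gA_def gB_def)
          moreover have "cost \<Omega> f k xs p h A x \<le> gA i x" using elim i by blast
          ultimately show False using elim by linarith
        qed
      qed
      then have "AE x in fmeas \<Omega> f. x \<notin> B i" unfolding M_def .
      then have "b i = 0" unfolding b_def
        by (rule mass_zero[OF assms(4,3) Bb[OF i(1)]])
      then show False using i cI[OF i(1)] by auto
    next
      case False
      have sc: "(\<Sum>i\<in>{1..k}. c i) = 1" unfolding c_def by (rule mass_sum[OF assms(4,3,5) partA])
      have sb: "(\<Sum>i\<in>{1..k}. b i) = 1" unfolding b_def by (rule mass_sum[OF assms(4,3,5) partB])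
      have "(\<Sum>i\<in>{1..k}. c i - b i) = 0" using sc sb by (simp add: sum_subtractf)
      moreover have "\<forall>i\<in>{1..k}. 0 \<le> c i - b i" using False by auto
      ultimately have "\<forall>i\<in>{1..k}. c i - b i = 0"
        using sum_nonneg_eq_0_iff[of "{1..k}" "\<lambda>i. c i - b i"] by auto
      then have gE: "\<forall>i\<in>{1..k}. gB i x = gA i x" for x by (simp add: gA_def gB_def)
      have "AE x in M. x \<notin> {x. cost \<Omega> f k xs p h B x < cost \<Omega> f k xs p h A x}"
        using AEB minA
      proof eventually_elim
        case (elim x)
        then obtain j where j: "j \<in> {1..k}" "cost \<Omega> f k xs p h B x = gB j x" by blast
        then show ?case using elim gE by fastforce
      qed
      moreover have Sm: "{x. cost \<Omega> f k xs p h B x < cost \<Omega> f k xs p h A x} \<in> sets M"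
        using pos emeasure_notin_sets by fastforce
      ultimately have "emeasure M {x. cost \<Omega> f k xs p h B x < cost \<Omega> f k xs p h A x} = 0"
        using AE_iff_measurable[OF Sm, of "\<lambda>x. x \<notin> {x. cost \<Omega> f k xs p h B x < cost \<Omega> f k xs p h A x}"]
        by (simp add: sp)
      then show False using pos by simp
    qed
  qed
  then show ?thesis using partA unfolding is_pareto_def by blast
qed

end
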